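(* Let $\kappa$ be an infinite cardinal and let $x$ be a regular ultrafilter on $\kappa$. Assume $Y$ is a compact Hausdorff space with $w(Y)\le\kappa$, $F\subseteq Y$ has empty interior, and $y\in F$. Then there is a map $g:\kappa\to Y$ such that: (A) $\beta g$ maps $\beta\kappa$ onto $Y$; (B) $(\beta g)(x) = y$; (C) $g(\xi)\notin F$ for all $\xi<\kappa$; (D) $(\beta g)^{-1}(F)$ is nowhere dense in $\beta\kappa$.
   Context: $\beta\kappa$ is the Čech–Stone compactification of the discrete space $\kappa$, i.e. the space of ultrafilters on $\kappa$ with principal ultrafilters identified with points of $\kappa$. For $g:\kappa\to Y$ with $Y$ compact Hausdorff, $\beta g:\beta\kappa\to Y$ is the unique continuous extension of $g$. An ultrafilter $x$ on $\kappa$ is regular if there are sets $E_\alpha\in x$ ($\alpha<\kappa$) such that for every $\xi<\kappa$ the set $\{\alpha<\kappa : \xi\in E_\alpha\}$ is finite. $w(Y)$ is the weight of $Y$. *)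

theory Defs
  imports "HOL-Analysis.Analysis"
begin

unbundle cardinal_syntax

definition ultrafilter_on :: "'k set set \<Rightarrow> bool" where
  "ultrafilter_on u \<longleftrightarrow>
     UNIV \<in> u \<and> {} \<notin> u \<and>
     (\<forall>A B. A \<in> u \<and> A \<subseteq> B \<longrightarrow> B \<in> u) \<and>
     (\<forall>A B. A \<in> u \<and> B \<in> u \<longrightarrow> A \<inter> B \<in> u) \<and>
     (\<forall>A. A \<in> u \<or> - A \<in> u)"

text \<open>Principal ultrafilter: identification of a point of 'k with a point of beta 'k.\<close>
definition principal_uf :: "'k \<Rightarrow> 'k set set" where
  "principal_uf \<xi> = {A. \<xi> \<in> A}"

text \<open>The Cech-Stone compactification beta 'k: ultrafilters with the Stone topology,
  generated by the basic open sets {u. A \<in> u}.\<close>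
definition beta_space :: "'k set set topology" where
  "beta_space = topology_generated_by {{u. ultrafilter_on u \<and> A \<in> u} | A. True}"

definition regular_uf :: "'k set set \<Rightarrow> bool" where
  "regular_uf x \<longleftrightarrow> (\<exists>E :: 'k \<Rightarrow> 'k set. (\<forall>\<alpha>. E \<alpha> \<in> x) \<and> (\<forall>\<xi>. finite {\<alpha>. \<xi> \<in> E \<alpha>}))"

text \<open>Extension beta g: sends an ultrafilter u to the limit of g along u
  (unique when Y is compact Hausdorff).\<close>
definition beta_ext :: "'b topology \<Rightarrow> ('k \<Rightarrow> 'b) \<Rightarrow> 'k set set \<Rightarrow> 'b" where
  "beta_ext Y g u = (THE y. y \<in> topspace Y \<and>
      (\<forall>U. openin Y U \<and> y \<in> U \<longrightarrow> {\<xi>. g \<xi> \<in> U} \<in> u))"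

definition weight_le :: "'b topology \<Rightarrow> 'k set \<Rightarrow> bool" where
  "weight_le Y K \<longleftrightarrow>
     (\<exists>\<B>. |\<B>| \<le>o |K| \<and> (\<forall>V \<in> \<B>. openin Y V) \<and>
        (\<forall>U y. openin Y U \<and> y \<in> U \<longrightarrow> (\<exists>V \<in> \<B>. y \<in> V \<and> V \<subseteq> U)))"

definition nowhere_dense_in :: "'a topology \<Rightarrow> 'a set \<Rightarrow> bool" where
  "nowhere_dense_in X S \<longleftrightarrow> X interior_of (X closure_of S) = {}"

end

theory Submission
  imports Defs
begin


definition fip :: "'a set set \<Rightarrow> bool" where
  "fip M \<longleftrightarrow> (\<forall>S. finite S \<and> S \<subseteq> M \<longrightarrow> \<Inter>S \<noteq> {})"

lemma Inter_insert_sub: "S \<subseteq> insert A M \<Longrightarrow> \<Inter>(S - {A}) \<inter> A \<subseteq> \<Inter>S"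
  by blast

lemma maximal_fip_uf:
  assumes fM: "fip M" and mx: "\<And>A. fip (insert A M) \<Longrightarrow> A \<in> M"
  shows "ultrafilter_on M"
proof -
  have UNIV: "UNIV \<in> M"
  proof (rule mx, unfold fip_def, intro allI impI)
    fix S assume S: "finite S \<and> S \<subseteq> insert UNIV M"
    have "finite (S - {UNIV})" "S - {UNIV} \<subseteq> M" using S by auto
    then have "\<Inter>(S - {UNIV}) \<noteq> {}" using fM unfolding fip_def by blast
    moreover have "\<Inter>(S - {UNIV}) \<inter> UNIV \<subseteq> \<Inter>S" using Inter_insert_sub S by blast
    ultimately show "\<Inter>S \<noteq> {}" by blast
  qed
  have emp: "{} \<notin> M" using fM unfolding fip_def
    by (metis Inter_empty Inter_insert empty_subsetI finite.emptyI finite_insert insert_subset inf_bot_left)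
  have up: "B \<in> M" if "A \<in> M" "A \<subseteq> B" for A B
  proof (rule mx, unfold fip_def, intro allI impI)
    fix S assume S: "finite S \<and> S \<subseteq> insert B M"
    have "finite (insert A (S - {B}))" "insert A (S - {B}) \<subseteq> M" using S that by auto
    then have "\<Inter>(insert A (S - {B})) \<noteq> {}" using fM unfolding fip_def by blast
    moreover have "\<Inter>(insert A (S - {B})) \<subseteq> \<Inter>S" using S that by blast
    ultimately show "\<Inter>S \<noteq> {}" by blast
  qed
  have int: "A \<inter> B \<in> M" if "A \<in> M" "B \<in> M" for A B
  proof (rule mx, unfold fip_def, intro allI impI)
    fix S assume S: "finite S \<and> S \<subseteq> insert (A \<inter> B) M"
    have "finite (insert A (insert B (S - {A \<inter> B})))" "insert A (insert B (S - {A \<inter> B})) \<subseteq> M" using S that by auto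
    then have "\<Inter>(insert A (insert B (S - {A \<inter> B}))) \<noteq> {}" using fM unfolding fip_def by blast
    moreover have "\<Inter>(insert A (insert B (S - {A \<inter> B}))) \<subseteq> \<Inter>S" using S that by blast
    ultimately show "\<Inter>S \<noteq> {}" by blast
  qed
  have compl: "A \<in> M \<or> - A \<in> M" for A
  proof (rule ccontr)
    assume "\<not> (A \<in> M \<or> - A \<in> M)"
    then have n1: "\<not> fip (insert A M)" and n2: "\<not> fip (insert (- A) M)" using mx by auto
    from n1 have "\<exists>S. finite S \<and> S \<subseteq> insert A M \<and> \<Inter>S = {}" by (simp add: fip_def)
    then obtain S where S: "finite S" "S \<subseteq> insert A M" "\<Inter>S = {}" by blast
    from n2 have "\<exists>S. finite S \<and> S \<subseteq> insert (-A) M \<and> \<Inter>S = {}" by (simp add: fip_def)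
    then obtain T where T: "finite T" "T \<subseteq> insert (-A) M" "\<Inter>T = {}" by blast
    have "\<Inter>(S - {A}) \<inter> A = {}" using Inter_insert_sub[OF S(2)] S(3) by blast
    moreover have "\<Inter>(T - {-A}) \<inter> -A = {}" using Inter_insert_sub[OF T(2)] T(3) by blast
    ultimately have "\<Inter>(S - {A}) \<inter> \<Inter>(T - {-A}) = {}" by blast
    then have "\<Inter>((S - {A}) \<union> (T - {-A})) = {}" by (simp add: Inter_Un_distrib)
    moreover have "finite ((S - {A}) \<union> (T - {-A}))" "(S - {A}) \<union> (T - {-A}) \<subseteq> M" using S T by auto
    ultimately show False using fM[unfolded fip_def, rule_format, of "(S - {A}) \<union> (T - {-A})"] by simp
  qed
  show ?thesis unfolding ultrafilter_on_def
  proof (intro conjI allI impI)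
    show "UNIV \<in> M" by (rule UNIV)
    show "{} \<notin> M" by (rule emp)
    fix A B
    show "A \<in> M \<and> A \<subseteq> B \<Longrightarrow> B \<in> M" using up by blast
    show "A \<in> M \<and> B \<in> M \<Longrightarrow> A \<inter> B \<in> M" using int by blast
  next
    fix A show "A \<in> M \<or> - A \<in> M" by (rule compl)
  qed
qed

lemma uf_exists:
  assumes G: "\<forall>A\<in>G. A \<noteq> {}" "\<forall>A\<in>G. \<forall>B\<in>G. \<exists>C\<in>G. C \<subseteq> A \<inter> B"
  shows "\<exists>u. ultrafilter_on u \<and> G \<subseteq> u"
proof -
  have ne: "\<exists>C\<in>G. C \<subseteq> \<Inter>S" if "finite S" "S \<noteq> {}" "S \<subseteq> G" for S
    using that
  proof (induction S rule: finite_ne_induct)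
    case (singleton x) then show ?case by blast
  next
    case (insert x F)
    then obtain C where "C \<in> G" "C \<subseteq> \<Inter>F" by blast
    moreover have "x \<in> G" using insert by blast
    ultimately obtain D where "D \<in> G" "D \<subseteq> x \<inter> C" using G(2) by blast
    then show ?case using \<open>C \<subseteq> \<Inter>F\<close> by blast
  qed
  have fG: "fip G" unfolding fip_def
  proof (intro allI impI)
    fix S assume S: "finite S \<and> S \<subseteq> G"
    show "\<Inter>S \<noteq> {}"
    proof (cases "S = {}")
      case False
      then obtain D where D: "D \<in> G" "D \<subseteq> \<Inter>S" using ne[of S] S by auto
      then have "D \<noteq> {}" using G(1) by auto
      with D(2) show ?thesis by auto
    qed simp
  qed
  define \<A> where "\<A> = {M. G \<subseteq> M \<and> fip M}"
  have "\<exists>M\<in>\<A>. \<forall>X\<in>\<A>. M \<subseteq> X \<longrightarrow> X = M"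
  proof (rule Zorn_Lemma2, intro ballI)
    fix C assume C: "C \<in> chains \<A>"
    show "\<exists>U\<in>\<A>. \<forall>X\<in>C. X \<subseteq> U"
    proof (cases "C = {}")
      case True then show ?thesis using fG \<A>_def by blast
    next
      case False
      have ch: "subset.chain \<A> C" using C chains_alt_def by blast
      have "fip (\<Union>C)" unfolding fip_def
      proof (intro allI impI)
        fix S assume S: "finite S \<and> S \<subseteq> \<Union>C"
        then obtain B where "B \<in> C" "S \<subseteq> B"
          using finite_subset_Union_chain[OF _ _ False ch] by blast
        moreover have "B \<in> \<A>" using \<open>B \<in> C\<close> C unfolding chains_def by blast
        ultimately have "fip B" "finite S" unfolding \<A>_def using S by auto
        then show "\<Inter>S \<noteq> {}" using \<open>S \<subseteq> B\<close> unfolding fip_def by auto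
      qed
      moreover have "G \<subseteq> \<Union>C" using False C unfolding chains_def \<A>_def by blast
      ultimately show ?thesis unfolding \<A>_def by blast
    qed
  qed
  then obtain M where M: "M \<in> \<A>" "\<And>X. X \<in> \<A> \<Longrightarrow> M \<subseteq> X \<Longrightarrow> X = M" by blast
  have "ultrafilter_on M"
  proof (rule maximal_fip_uf)
    show "fip M" using M \<A>_def by blast
    fix A assume "fip (insert A M)"
    then have "insert A M \<in> \<A>" using M(1) \<A>_def by blast
    then have "insert A M = M" using M(2) by blast
    then show "A \<in> M" by blast
  qed
  then show ?thesis using M(1) \<A>_def by blast
qed



definition is_lim :: "'b topology \<Rightarrow> ('k \<Rightarrow> 'b) \<Rightarrow> 'k set set \<Rightarrow> 'b \<Rightarrow> bool" where
  "is_lim Y g u z \<longleftrightarrow> z \<in> topspace Y \<and> (\<forall>U. openin Y U \<and> z \<in> U \<longrightarrow> {\<xi>. g \<xi> \<in> U} \<in> u)"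

lemma uf_up: "ultrafilter_on u \<Longrightarrow> A \<in> u \<Longrightarrow> A \<subseteq> B \<Longrightarrow> B \<in> u"
  unfolding ultrafilter_on_def by blast

lemma uf_int: "ultrafilter_on u \<Longrightarrow> A \<in> u \<Longrightarrow> B \<in> u \<Longrightarrow> A \<inter> B \<in> u"
  unfolding ultrafilter_on_def by blast

lemma uf_empty: "ultrafilter_on u \<Longrightarrow> {} \<notin> u"
  unfolding ultrafilter_on_def by blast

lemma uf_UNIV: "ultrafilter_on u \<Longrightarrow> UNIV \<in> u"
  unfolding ultrafilter_on_def by blast

lemma uf_compl: "ultrafilter_on u \<Longrightarrow> A \<notin> u \<Longrightarrow> - A \<in> u"
  unfolding ultrafilter_on_def by blast

lemma uf_Inter: assumes "ultrafilter_on u" shows "finite S \<Longrightarrow> S \<subseteq> u \<Longrightarrow> \<Inter>S \<in> u"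
proof (induction S rule: finite_induct)
  case empty then show ?case using uf_UNIV assms by simp
next
  case (insert A S) then show ?case using uf_int[of u A "\<Inter>S"] assms by simp
qed

lemma lim_unique:
  assumes "Hausdorff_space Y" "ultrafilter_on u" "is_lim Y g u z1" "is_lim Y g u z2"
  shows "z1 = z2"
proof (rule ccontr)
  assume ne: "z1 \<noteq> z2"
  have t1: "z1 \<in> topspace Y" using assms(3) is_lim_def by metis
  have t2: "z2 \<in> topspace Y" using assms(4) is_lim_def by metis
  note t = t1 t2
  obtain U V where UV: "openin Y U" "openin Y V" "z1 \<in> U" "z2 \<in> V" "disjnt U V"
    using assms(1) t ne unfolding Hausdorff_space_def by blast
  have "{\<xi>. g \<xi> \<in> U} \<in> u" "{\<xi>. g \<xi> \<in> V} \<in> u" using assms(3,4) UV unfolding is_lim_def by auto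
  then have "{\<xi>. g \<xi> \<in> U} \<inter> {\<xi>. g \<xi> \<in> V} \<in> u" using uf_int assms(2) by blast
  moreover have "{\<xi>. g \<xi> \<in> U} \<inter> {\<xi>. g \<xi> \<in> V} = {}" using UV(5) by (auto simp: disjnt_def)
  ultimately show False using uf_empty assms(2) by metis
qed

lemma beta_ext_eq:
  assumes "Hausdorff_space Y" "ultrafilter_on u" "is_lim Y g u z"
  shows "beta_ext Y g u = z"
  unfolding beta_ext_def
proof (rule the_equality)
  show "z \<in> topspace Y \<and> (\<forall>U. openin Y U \<and> z \<in> U \<longrightarrow> {\<xi>. g \<xi> \<in> U} \<in> u)"
    using assms(3) is_lim_def by metis
  fix w assume "w \<in> topspace Y \<and> (\<forall>U. openin Y U \<and> w \<in> U \<longrightarrow> {\<xi>. g \<xi> \<in> U} \<in> u)"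
  then have "is_lim Y g u w" using is_lim_def by metis
  then show "w = z" using lim_unique assms by metis
qed

lemma lim_exists:
  assumes "compact_space Y" "ultrafilter_on u" "\<forall>\<xi>. g \<xi> \<in> topspace Y"
  shows "\<exists>z. is_lim Y g u z"
proof (rule ccontr)
  assume "\<nexists>z. is_lim Y g u z"
  then have "\<forall>z\<in>topspace Y. \<exists>U. openin Y U \<and> z \<in> U \<and> {\<xi>. g \<xi> \<in> U} \<notin> u"
    by (auto simp: is_lim_def)
  then obtain W where W: "\<forall>z\<in>topspace Y. openin Y (W z) \<and> z \<in> W z \<and> {\<xi>. g \<xi> \<in> W z} \<notin> u"
    by metis
  have "compactin Y (topspace Y)" using assms(1) compact_space_def by metis
  moreover have "\<forall>B\<in>W ` topspace Y. openin Y B" "topspace Y \<subseteq> \<Union>(W ` topspace Y)" using W by auto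
  ultimately obtain \<T> where T: "finite \<T>" "\<T> \<subseteq> W ` topspace Y" "topspace Y \<subseteq> \<Union>\<T>"
    unfolding compactin_def by meson
  then obtain Z where Z: "Z \<subseteq> topspace Y" "finite Z" "\<T> = W ` Z"
    by (meson finite_subset_image)
  define S where "S = (\<lambda>z. - {\<xi>. g \<xi> \<in> W z}) ` Z"
  have "S \<subseteq> u" unfolding S_def using Z(1) W uf_compl assms(2) by blast
  moreover have "finite S" unfolding S_def using Z(2) by simp
  ultimately have "\<Inter>S \<in> u" using uf_Inter assms(2) by blast
  moreover have "\<Inter>S = {}"
  proof -
    have "\<xi> \<notin> \<Inter>S" for \<xi>
    proof -
      have "g \<xi> \<in> \<Union>(W ` Z)" using T(3) Z(3) assms(3) by blast
      then obtain z where "z \<in> Z" "g \<xi> \<in> W z" by blast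
      then show ?thesis unfolding S_def by blast
    qed
    then show ?thesis by blast
  qed
  ultimately show False using uf_empty assms(2) by metis
qed

lemma topspace_beta: "topspace beta_space = {u. ultrafilter_on u}"
  unfolding beta_space_def topology_generated_by_topspace
  using uf_UNIV by blast

lemma open_beta_basic:
  assumes "generate_topology_on {{u. ultrafilter_on u \<and> A \<in> u} | A. True} W"
  shows "\<forall>u\<in>W. ultrafilter_on u \<longrightarrow> (\<exists>A\<in>u. {v. ultrafilter_on v \<and> A \<in> v} \<subseteq> W)"
  using assms
proof (induction rule: generate_topology_on.induct)
  case Empty then show ?case by simp
next
  case (Int a b)
  show ?case
  proof (intro ballI impI)
    fix u assume u: "u \<in> a \<inter> b" "ultrafilter_on u"
    obtain A where A: "A \<in> u" "{v. ultrafilter_on v \<and> A \<in> v} \<subseteq> a" using Int.IH(1) u by blast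
    obtain B where B: "B \<in> u" "{v. ultrafilter_on v \<and> B \<in> v} \<subseteq> b" using Int.IH(2) u by blast
    have "A \<inter> B \<in> u" using uf_int u A B by blast
    moreover have "{v. ultrafilter_on v \<and> A \<inter> B \<in> v} \<subseteq> a \<inter> b"
      using A(2) B(2) uf_up[of _ "A \<inter> B"] by blast
    ultimately show "\<exists>C\<in>u. {v. ultrafilter_on v \<and> C \<in> v} \<subseteq> a \<inter> b" by blast
  qed
next
  case (UN K)
  then show ?case by blast
next
  case (Basis s)
  then show ?case by blast
qed

lemma basic_open: "openin beta_space {v. ultrafilter_on v \<and> A \<in> v}"
  unfolding beta_space_def openin_topology_generated_by_iff
  by (rule generate_topology_on.Basis) blast

lemma principal_uf: "ultrafilter_on (principal_uf \<xi>)"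
  unfolding ultrafilter_on_def principal_uf_def by auto

lemma nd_lemma:
  assumes "Hausdorff_space Y" "\<forall>\<xi>. g \<xi> \<in> topspace Y" "\<forall>\<xi>. g \<xi> \<notin> F"
  shows "nowhere_dense_in beta_space {u \<in> topspace beta_space. beta_ext Y g u \<in> F}"
proof -
  define S where "S = {u \<in> topspace beta_space. beta_ext Y g u \<in> F}"
  have "u0 \<notin> beta_space interior_of (beta_space closure_of S)" for u0
  proof
    assume "u0 \<in> beta_space interior_of (beta_space closure_of S)"
    then obtain W where W: "openin beta_space W" "u0 \<in> W" "W \<subseteq> beta_space closure_of S"
      unfolding interior_of_def by blast
    have "u0 \<in> topspace beta_space" using W openin_subset by blast
    then have u0: "ultrafilter_on u0" using topspace_beta by blast
    have "generate_topology_on {{u. ultrafilter_on u \<and> A \<in> u} | A. True} W"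
      using W(1) unfolding beta_space_def openin_topology_generated_by_iff .
    then obtain A where A: "A \<in> u0" "{v. ultrafilter_on v \<and> A \<in> v} \<subseteq> W"
      using open_beta_basic W(2) u0 by blast
    have "A \<noteq> {}" using A(1) uf_empty u0 by metis
    then obtain \<xi> where "\<xi> \<in> A" by blast
    then have "A \<in> principal_uf \<xi>" by (simp add: principal_uf_def)
    then have "principal_uf \<xi> \<in> {v. ultrafilter_on v \<and> A \<in> v}" using principal_uf[of \<xi>] by simp
    then have "principal_uf \<xi> \<in> W" by (rule subsetD[OF A(2)])
    then have p: "principal_uf \<xi> \<in> beta_space closure_of S" by (rule subsetD[OF W(3)])
    have "{\<xi>} \<in> principal_uf \<xi>" by (simp add: principal_uf_def)
    then have pm: "principal_uf \<xi> \<in> {v. ultrafilter_on v \<and> {\<xi>} \<in> v}" using principal_uf[of \<xi>] by simp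
    have "\<forall>T. principal_uf \<xi> \<in> T \<and> openin beta_space T \<longrightarrow> (\<exists>y. y \<in> S \<and> y \<in> T)"
      using p unfolding in_closure_of by (rule conjunct2)
    from this[rule_format, OF conjI[OF pm basic_open[of "{\<xi>}"]]]
    obtain v where v0: "v \<in> S" "v \<in> {v. ultrafilter_on v \<and> {\<xi>} \<in> v}" by (elim exE conjE)
    then have v: "v \<in> S" "ultrafilter_on v" "{\<xi>} \<in> v" by simp_all
    have "is_lim Y g v (g \<xi>)"
      unfolding is_lim_def using assms(2) v uf_up[of v "{\<xi>}"] by auto
    then have "beta_ext Y g v = g \<xi>" using beta_ext_eq assms(1) v(2) by metis
    then show False using v(1) assms(3) unfolding S_def by auto
  qed
  then show ?thesis unfolding nowhere_dense_in_def S_def by blast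
qed



theorem lemma7:
  fixes x :: "'k set set" and Y :: "'b topology" and F :: "'b set" and y :: 'b
  assumes "infinite (UNIV :: 'k set)"
    and "ultrafilter_on x" and "regular_uf x"
    and "compact_space Y" and "Hausdorff_space Y"
    and "weight_le Y (UNIV :: 'k set)"
    and "F \<subseteq> topspace Y" and "Y interior_of F = {}"
    and "y \<in> F"
  shows "\<exists>g :: 'k \<Rightarrow> 'b. (\<forall>\<xi>. g \<xi> \<in> topspace Y) \<and>
           beta_ext Y g ` topspace beta_space = topspace Y \<and>
           beta_ext Y g x = y \<and>
           (\<forall>\<xi>. g \<xi> \<notin> F) \<and>
           nowhere_dense_in beta_space {u \<in> topspace beta_space. beta_ext Y g u \<in> F}"
proof -
  obtain E :: "'k \<Rightarrow> 'k set" where E: "\<And>\<alpha>. E \<alpha> \<in> x" "\<And>\<xi>. finite {\<alpha>. \<xi> \<in> E \<alpha>}"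
    using assms(3) unfolding regular_uf_def by blast
  obtain \<B> where B: "|\<B>| \<le>o |UNIV :: 'k set|" "\<And>V. V \<in> \<B> \<Longrightarrow> openin Y V"
    "\<And>U z. openin Y U \<Longrightarrow> z \<in> U \<Longrightarrow> \<exists>V\<in>\<B>. z \<in> V \<and> V \<subseteq> U"
    using assms(6) unfolding weight_le_def by metis
  define B' where "B' = \<B> - {{}}"
  have yt: "y \<in> topspace Y" using assms(7,9) by blast
  then obtain V0 where "V0 \<in> \<B>" "y \<in> V0" using B(3)[OF openin_topspace] by blast
  then have B'ne: "B' \<noteq> {}" unfolding B'_def by blast
  have "|B'| \<le>o |UNIV :: 'k set|"
    using card_of_mono1[of B' \<B>] B(1) ordLeq_transitive unfolding B'_def by blast
  then obtain e :: "'k \<Rightarrow> 'b set" where e: "e ` UNIV = B'"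
    using card_of_ordLeq2[OF B'ne] by metis
  have eB: "e \<beta> \<in> B'" for \<beta> using e rangeI[of e \<beta>] by simp
  have eo: "openin Y (e \<beta>)" "e \<beta> \<noteq> {}" for \<beta>
    using eB[of \<beta>] B(2) unfolding B'_def by auto
  have eb: "\<exists>\<beta>. e \<beta> = V" if "V \<in> \<B>" "V \<noteq> {}" for V
  proof -
    have "V \<in> range e" using that e unfolding B'_def by simp
    then show ?thesis by (metis imageE)
  qed
  have "|(UNIV :: 'k set) \<times> (UNIV :: 'k set)| =o |UNIV :: 'k set|" by (rule card_of_Times_same_infinite[OF assms(1)])
  then obtain f :: "'k \<times> 'k \<Rightarrow> 'k" where "bij_betw f (UNIV \<times> UNIV) UNIV"
    using card_of_ordIso by blast
  then have injf: "inj f" by (simp add: bij_betw_def)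
  obtain a b :: 'k where ab: "a \<noteq> b"
  proof -
    have "UNIV \<noteq> {undefined :: 'k}" using assms(1) by (metis finite.emptyI finite_insert)
    then obtain b :: 'k where "b \<noteq> undefined" by blast
    then show ?thesis using that by blast
  qed
  define Nc where "Nc c = range (\<lambda>\<beta>. f (c, \<beta>))" for c
  have "Nc a \<inter> Nc b = {}" unfolding Nc_def using ab injf by (auto dest: injD)
  then have "\<not> (Nc a \<in> x \<and> Nc b \<in> x)" using uf_int uf_empty assms(2) by metis
  then obtain c where c: "Nc c \<notin> x" by blast
  define N where "N = Nc c"
  have Nx: "- N \<in> x" using uf_compl[OF assms(2)] c N_def by blast
  have nF: "\<exists>p\<in>V. p \<notin> F" if "openin Y V" "V \<noteq> {}" for V
  proof (rule ccontr)
    assume "\<not> (\<exists>p\<in>V. p \<notin> F)"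
    then have "V \<subseteq> F" by blast
    then have "V \<subseteq> Y interior_of F" using interior_of_maximal that(1) by metis
    then show False using assms(8) that(2) by blast
  qed
  define W where "W \<xi> = \<Inter>(insert (topspace Y) (e ` {\<alpha>. \<xi> \<in> E \<alpha> \<and> y \<in> e \<alpha>}))" for \<xi>
  have Wo: "openin Y (W \<xi>)" for \<xi>
  proof -
    have "finite {\<alpha>. \<xi> \<in> E \<alpha> \<and> y \<in> e \<alpha>}" using E(2)[of \<xi>] by (rule finite_subset[rotated]) blast
    then show ?thesis unfolding W_def using eo by (intro openin_Inter) auto
  qed
  have yW: "y \<in> W \<xi>" for \<xi> unfolding W_def using yt by blast
  have Wt: "W \<xi> \<subseteq> topspace Y" for \<xi> unfolding W_def by blast
  define g where "g \<xi> = (if \<xi> \<in> N then (SOME p. p \<in> e (snd (inv f \<xi>)) \<and> p \<notin> F)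
     else (SOME p. p \<in> W \<xi> \<and> p \<notin> F))" for \<xi>
  have g1: "g \<xi> \<in> W \<xi> \<and> g \<xi> \<notin> F" if "\<xi> \<notin> N" for \<xi>
  proof -
    have "\<exists>p. p \<in> W \<xi> \<and> p \<notin> F" using nF[OF Wo] yW by blast
    then have "(SOME p. p \<in> W \<xi> \<and> p \<notin> F) \<in> W \<xi> \<and> (SOME p. p \<in> W \<xi> \<and> p \<notin> F) \<notin> F"
      by (rule someI_ex)
    then show ?thesis unfolding g_def using that by simp
  qed
  have g2: "g (f (c, \<beta>)) \<in> e \<beta> \<and> g (f (c, \<beta>)) \<notin> F" for \<beta>
  proof -
    have "f (c, \<beta>) \<in> N" unfolding N_def Nc_def by blast
    moreover have "snd (inv f (f (c, \<beta>))) = \<beta>" using inv_f_f[OF injf] by simp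
    moreover have "\<exists>p. p \<in> e \<beta> \<and> p \<notin> F" using nF[OF eo] by blast
    then have "(SOME p. p \<in> e \<beta> \<and> p \<notin> F) \<in> e \<beta> \<and> (SOME p. p \<in> e \<beta> \<and> p \<notin> F) \<notin> F"
      by (rule someI_ex)
    ultimately show ?thesis unfolding g_def by simp
  qed
  have gN: "\<exists>\<beta>. \<xi> = f (c, \<beta>)" if "\<xi> \<in> N" for \<xi> using that unfolding N_def Nc_def by blast
  have gt: "\<forall>\<xi>. g \<xi> \<in> topspace Y"
  proof
    fix \<xi> show "g \<xi> \<in> topspace Y"
    proof (cases "\<xi> \<in> N")
      case True
      then obtain \<beta> where "\<xi> = f (c, \<beta>)" using gN by blast
      then show ?thesis using g2[of \<beta>] openin_subset[OF eo(1)] by blast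
    next
      case False then show ?thesis using g1 Wt by blast
    qed
  qed
  have gF: "\<forall>\<xi>. g \<xi> \<notin> F"
  proof
    fix \<xi> show "g \<xi> \<notin> F"
    proof (cases "\<xi> \<in> N")
      case True
      then obtain \<beta> where "\<xi> = f (c, \<beta>)" using gN by blast
      then show ?thesis using g2[of \<beta>] by blast
    next
      case False then show ?thesis using g1 by blast
    qed
  qed
  have limx: "is_lim Y g x y"
    unfolding is_lim_def
  proof (intro conjI allI impI)
    show "y \<in> topspace Y" by (rule yt)
    fix U assume U: "openin Y U \<and> y \<in> U"
    then obtain V where V: "V \<in> \<B>" "y \<in> V" "V \<subseteq> U" using B(3) by blast
    then obtain \<alpha> where \<alpha>: "e \<alpha> = V" using eb by blast
    have "E \<alpha> \<inter> - N \<subseteq> {\<xi>. g \<xi> \<in> U}"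
    proof
      fix \<xi> assume \<xi>: "\<xi> \<in> E \<alpha> \<inter> - N"
      then have "g \<xi> \<in> W \<xi>" using g1 by blast
      moreover have "W \<xi> \<subseteq> e \<alpha>" unfolding W_def using \<xi> \<alpha> V(2) by blast
      ultimately show "\<xi> \<in> {\<xi>. g \<xi> \<in> U}" using \<alpha> V(3) by blast
    qed
    moreover have "E \<alpha> \<inter> - N \<in> x" using uf_int[OF assms(2) E(1) Nx] .
    ultimately show "{\<xi>. g \<xi> \<in> U} \<in> x" using uf_up[OF assms(2)] by blast
  qed
  have surj: "beta_ext Y g ` topspace beta_space = topspace Y"
  proof
    show "beta_ext Y g ` topspace beta_space \<subseteq> topspace Y"
    proof
      fix z assume "z \<in> beta_ext Y g ` topspace beta_space"
      then obtain u where u: "ultrafilter_on u" "z = beta_ext Y g u" using topspace_beta by blast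
      obtain w where "is_lim Y g u w" using lim_exists[OF assms(4) u(1) gt] by blast
      then show "z \<in> topspace Y" using beta_ext_eq[OF assms(5) u(1)] u(2) is_lim_def by metis
    qed
    show "topspace Y \<subseteq> beta_ext Y g ` topspace beta_space"
    proof
      fix z assume z: "z \<in> topspace Y"
      define G where "G = {{\<xi>. g \<xi> \<in> U} | U. openin Y U \<and> z \<in> U}"
      have G1: "\<forall>A\<in>G. A \<noteq> {}"
      proof
        fix A assume "A \<in> G"
        then obtain U where U: "A = {\<xi>. g \<xi> \<in> U}" "openin Y U" "z \<in> U" unfolding G_def by blast
        then obtain V where V: "V \<in> \<B>" "z \<in> V" "V \<subseteq> U" using B(3) by blast
        then obtain \<beta> where "e \<beta> = V" using eb by blast
        then have "f (c, \<beta>) \<in> A" using g2[of \<beta>] U(1) V(3) by blast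
        then show "A \<noteq> {}" by blast
      qed
      have G2: "\<forall>A\<in>G. \<forall>B\<in>G. \<exists>C\<in>G. C \<subseteq> A \<inter> B"
      proof (intro ballI)
        fix A B assume "A \<in> G" "B \<in> G"
        then obtain U1 U2 where "A = {\<xi>. g \<xi> \<in> U1}" "openin Y U1" "z \<in> U1"
          "B = {\<xi>. g \<xi> \<in> U2}" "openin Y U2" "z \<in> U2" unfolding G_def by blast
        then have "{\<xi>. g \<xi> \<in> U1 \<inter> U2} \<in> G" "{\<xi>. g \<xi> \<in> U1 \<inter> U2} \<subseteq> A \<inter> B"
          unfolding G_def by auto
        then show "\<exists>C\<in>G. C \<subseteq> A \<inter> B" by blast
      qed
      obtain u where u: "ultrafilter_on u" "G \<subseteq> u" using uf_exists[OF G1 G2] by blast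
      have "is_lim Y g u z" unfolding is_lim_def using z u(2) unfolding G_def by blast
      then have "beta_ext Y g u = z" using beta_ext_eq[OF assms(5) u(1)] by blast
      moreover have "u \<in> topspace beta_space" using topspace_beta u(1) by blast
      ultimately show "z \<in> beta_ext Y g ` topspace beta_space" by blast
    qed
  qed
  have "beta_ext Y g x = y" using beta_ext_eq[OF assms(5,2) limx] .
  then show ?thesis using gt surj gF nd_lemma[OF assms(5) gt gF] by blast
qed

end
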